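(* Let $\mathcal{H}$ be a family of $h$ halfspaces in $\mathbb{R}^d$ and let $k$ be a positive integer. Suppose that for some positive integer $t$ there exists an integer $m$ with the following property: the $t$-tuples of every finite point set $S\subset\mathbb{R}^d$ can be $k$-colored such that every $\mathcal{H}$-region that contains at least $m$ points of $S$ contains a $t$-tuple of each of the $k$ colors. Then for every integer $t'>t$, with $m'=m+t'-t$, the $t'$-tuples of every finite point set $S\subset\mathbb{R}^d$ can be $k$-colored such that every $\mathcal{H}$-region that contains at least $m'$ points of $S$ contains a $t'$-tuple of each of the $k$ colors.
   Context: Given a finite family of halfspaces $\mathcal{H}=\{H_1,\dots,H_h\}$ in $\mathbb{R}^d$, a region $R$ is an $\mathcal{H}$-region if it is the intersection of finitely many halfspaces, each of which is a translate of one of the halfspaces in $\mathcal{H}$. A $t$-tuple of points of $S$ is an unordered $t$-element subset of $S$; a region contains it if it contains all its points. *)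

theory Defs
  imports "HOL-Analysis.Analysis"
begin

definition halfspace :: "('a::euclidean_space) set \<Rightarrow> bool" where
  "halfspace H \<longleftrightarrow> (\<exists>a b. a \<noteq> 0 \<and> H = {x. a \<bullet> x \<le> b})"

definition translate :: "'a::euclidean_space \<Rightarrow> 'a set \<Rightarrow> 'a set" where
  "translate v H = (\<lambda>x. v + x) ` H"

definition region :: "('a::euclidean_space) set set \<Rightarrow> 'a set \<Rightarrow> bool" where
  "region \<H> R \<longleftrightarrow> (\<exists>F. finite F \<and> (\<forall>G\<in>F. \<exists>H\<in>\<H>. \<exists>v. G = translate v H) \<and> R = \<Inter>F)"

text \<open>Colours are 0..k-1; a t-tuple of S is a t-element subset of S.\<close>
definition colorable :: "('a::euclidean_space) set set \<Rightarrow> nat \<Rightarrow> nat \<Rightarrow> int \<Rightarrow> bool" where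
  "colorable \<H> k t m \<longleftrightarrow>
     (\<forall>S. finite S \<longrightarrow>
        (\<exists>c :: 'a set \<Rightarrow> nat.
           (\<forall>T. T \<subseteq> S \<and> card T = t \<longrightarrow> c T < k) \<and>
           (\<forall>R. region \<H> R \<and> int (card (R \<inter> S)) \<ge> m \<longrightarrow>
              (\<forall>i<k. \<exists>T. T \<subseteq> R \<inter> S \<and> card T = t \<and> c T = i))))"

end

theory Submission
  imports Defs
begin

lemma colorable_m_pos:
  assumes "colorable \<H> k t m" "k > 0" "t > 0"
  shows "m \<ge> 1"
proof (rule ccontr)
  assume "\<not> m \<ge> 1"
  hence m0: "m \<le> 0" by simp
  have "finite ({}::'a set)" by simp
  from assms(1)[unfolded colorable_def, rule_format, OF this] obtain c :: "'a set \<Rightarrow> nat" where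
    c: "\<forall>R. region \<H> R \<and> int (card (R \<inter> {})) \<ge> m \<longrightarrow>
              (\<forall>i<k. \<exists>T. T \<subseteq> R \<inter> {} \<and> card T = t \<and> c T = i)"
    by blast
  have "region \<H> (UNIV :: 'a set)" unfolding region_def
    by (rule exI[of _ "{}"]) auto
  moreover have "int (card (UNIV \<inter> ({}::'a set))) \<ge> m" using m0 by simp
  ultimately have "\<forall>i<k. \<exists>T. T \<subseteq> UNIV \<inter> {} \<and> card T = t \<and> c T = i"
    by (intro mp[OF spec[OF c, of UNIV]] conjI)
  from this[rule_format, OF assms(2)] obtain T where "T \<subseteq> UNIV \<inter> {}" "card T = t" "c T = 0"
    by (elim exE conjE)
  hence "T = {}" "card T = t" by auto
  with assms(3) show False by simp
qed

lemma colorable_step: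
  fixes \<H> :: "('a::euclidean_space) set set"
  assumes col: "colorable \<H> k t m" and k: "k > 0" and t: "t > 0"
  shows "colorable \<H> k (Suc t) (m + 1)"
  unfolding colorable_def
proof (intro allI impI)
  fix S :: "'a set" assume fS: "finite S"
  have m1: "m \<ge> 1" using colorable_m_pos[OF col k t] .
  define P where "P q c \<longleftrightarrow>
           (\<forall>T. T \<subseteq> S - {q} \<and> card T = t \<longrightarrow> c T < k) \<and>
           (\<forall>R. region \<H> R \<and> int (card (R \<inter> (S - {q}))) \<ge> m \<longrightarrow>
              (\<forall>i<k. \<exists>T. T \<subseteq> R \<inter> (S - {q}) \<and> card T = t \<and> c T = i))"
    for q and c :: "'a set \<Rightarrow> nat"
  have "\<exists>c. P q c" for q
  proof -
    have "finite (S - {q})" using fS by simp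
    from col[unfolded colorable_def, rule_format, OF this]
    show ?thesis unfolding P_def .
  qed
  then obtain C where C0: "\<And>q. P q (C q)" by metis
  have C: "(\<forall>T. T \<subseteq> S - {q} \<and> card T = t \<longrightarrow> C q T < k) \<and>
           (\<forall>R. region \<H> R \<and> int (card (R \<inter> (S - {q}))) \<ge> m \<longrightarrow>
              (\<forall>i<k. \<exists>T. T \<subseteq> R \<inter> (S - {q}) \<and> card T = t \<and> C q T = i))" for q
    using C0[of q] unfolding P_def .
  obtain f :: "'a \<Rightarrow> nat" where f: "inj_on f S"
    using fS finite_imp_inj_to_nat_seg by blast
  define top where "top T = inv_into T f (Max (f ` T))" for T
  have top1: "top T \<in> T \<and> (\<forall>y\<in>T. f y \<le> f (top T))"
    if "T \<subseteq> S" "T \<noteq> {}" for T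
  proof -
    have fT: "finite T" using that fS finite_subset by blast
    have "Max (f ` T) \<in> f ` T" using fT that by simp
    hence "top T \<in> T" "f (top T) = Max (f ` T)"
      unfolding top_def by (auto intro: inv_into_into f_inv_into_f)
    thus ?thesis using fT by auto
  qed
  have top2: "top T = q" if "T \<subseteq> S" "q \<in> T" "\<forall>y\<in>T. f y \<le> f q" for T q
  proof -
    have "T \<noteq> {}" using that by auto
    from top1[OF that(1) this] that have "f (top T) = f q" "top T \<in> T" by (auto intro: antisym)
    thus ?thesis using that by (intro inj_onD[OF f]) auto
  qed
  define c' where "c' T = C (top T) (T - {top T})" for T
  show "\<exists>c :: 'a set \<Rightarrow> nat.
           (\<forall>T. T \<subseteq> S \<and> card T = Suc t \<longrightarrow> c T < k) \<and>
           (\<forall>R. region \<H> R \<and> int (card (R \<inter> S)) \<ge> m + 1 \<longrightarrow>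
              (\<forall>i<k. \<exists>T. T \<subseteq> R \<inter> S \<and> card T = Suc t \<and> c T = i))"
  proof (rule exI[of _ c'], intro conjI allI impI)
    fix T assume T: "T \<subseteq> S \<and> card T = Suc t"
    hence ne: "T \<noteq> {}" by auto
    have fT: "finite T" using T fS finite_subset by blast
    have q: "top T \<in> T" using top1[OF _ ne] T by blast
    have "T - {top T} \<subseteq> S - {top T}" "card (T - {top T}) = t"
      using T q fT by auto
    thus "c' T < k" unfolding c'_def using conjunct1[OF C[of "top T"]] by blast
  next
    fix R i assume R: "region \<H> R \<and> int (card (R \<inter> S)) \<ge> m + 1" and i: "i < k"
    have fRS: "finite (R \<inter> S)" using fS by simp
    have ne: "R \<inter> S \<noteq> {}" proof
      assume "R \<inter> S = {}"
      with R m1 show False by simp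
    qed
    define q where "q = top (R \<inter> S)"
    have q: "q \<in> R \<inter> S" "\<forall>y\<in>R \<inter> S. f y \<le> f q" using top1[OF _ ne] q_def by auto
    have "R \<inter> (S - {q}) = (R \<inter> S) - {q}" by auto
    hence "card (R \<inter> (S - {q})) = card (R \<inter> S) - 1" using q fRS by simp
    hence "int (card (R \<inter> (S - {q}))) \<ge> m" using R m1 by linarith
    then obtain T' where T': "T' \<subseteq> R \<inter> (S - {q})" "card T' = t" "C q T' = i"
      using conjunct2[OF C[of q]] R i by blast
    define T where "T = insert q T'"
    have fT': "finite T'" using T' fS finite_subset by blast
    have qT': "q \<notin> T'" using T' by auto
    have TS: "T \<subseteq> R \<inter> S" using T' q unfolding T_def by auto
    have cT: "card T = Suc t" using fT' qT' T' unfolding T_def by simp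
    have "top T = q" using top2[of T q] TS q unfolding T_def by auto
    hence "c' T = i" unfolding c'_def T_def using qT' T' by simp
    thus "\<exists>T. T \<subseteq> R \<inter> S \<and> card T = Suc t \<and> c' T = i" using TS cT by blast
  qed
qed

theorem theorem7:
  fixes \<H> :: "(real ^ 'n) set set" and k t t' :: nat and m :: int
  assumes "finite \<H>" and "\<forall>H\<in>\<H>. halfspace H"
    and "k > 0" and "t > 0"
    and "colorable \<H> k t m"
    and "t' > t"
  shows "colorable \<H> k t' (m + int t' - int t)"
proof -
  have "colorable \<H> k (t + j) (m + int j)" for j
  proof (induction j)
    case 0 thus ?case using assms(5) by simp
  next
    case (Suc j)
    from colorable_step[OF this assms(3)] assms(4) show ?case
      by (simp add: algebra_simps)
  qed
  from this[of "t' - t"] assms(6) show ?thesis by (simp add: of_nat_diff algebra_simps)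
qed

end
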